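(* For every $t\in\mathbb N_T$, every $m\in\mathcal M_n$ and every $\gamma\in\mathcal G$, $$\mathbb E\big[\|\bar f_t(m,\gamma,\mathbf w)-\hat f_t(m,\gamma)\|_\infty\big]\le\mathcal O(1/\sqrt n),$$ where the expectation is over $\mathbf w=(w^1,\dots,w^n)$ with $w^1,\dots,w^n$ i.i.d. with law $\mathbb P(w_t=\cdot)$.
   Context: Let $n,T\in\mathbb N$, $\mathbb N_T=\{1,\dots,T\}$, $\mathcal X,\mathcal U,\mathcal W$ finite sets, $\mathcal I(\mathcal X)=[0,1]^{\mathcal X}$, $\Delta(\mathcal X)$ the probability vectors on $\mathcal X$, $\mathcal M_n=\{m\in\Delta(\mathcal X): m(x)\in\{0,\tfrac1n,\dots,1\}\}$. For each $t$, $f_t:\mathcal X\times\mathcal U\times\mathcal W\times\mathcal I(\mathcal X)\to\mathcal X$, $\mathbb P(w_t=\cdot)$ a probability law on $\mathcal W$, and $\mathbb P(y|x,u,z)=\sum_w\mathbb 1(f_t(x,u,w,z)=y)\mathbb P(w_t=w)$. $\mathcal G$ is the set of maps $\gamma:\mathcal X\to\mathcal U$. Define $\hat f_t(z,\gamma)(y)=\sum_x z(x)\mathbb P(y|x,\gamma(x),z)$ and, for $\mathbf w=(w^1,\dots,w^n)\in\mathcal W^n$, $$\bar f_t(m,\gamma,\mathbf w)(y)=\sum_{x\in\mathcal X}\sum_{w\in\mathcal W}\mathbb 1\big(f_t(x,\gamma(x),w,m)=y\big)\,m(x)\,\frac1n\sum_{i=1}^n\mathbb 1(w^i=w),\quad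 y\in\mathcal X.$$ The data $T,\mathcal X,\mathcal U,\mathcal W,f_t$ and the noise laws do not depend on $n$; $\mathcal O(1/\sqrt n)$ denotes a quantity bounded by $C/\sqrt n$ with $C$ independent of $n$ (and of $m,\gamma$). *)

theory Defs
  imports "HOL-Probability.Probability"
begin

definition trans_prob ::
  "(nat \<Rightarrow> 'x \<Rightarrow> 'u \<Rightarrow> 'w::finite \<Rightarrow> ('x \<Rightarrow> real) \<Rightarrow> 'x) \<Rightarrow> (nat \<Rightarrow> 'w pmf)
    \<Rightarrow> nat \<Rightarrow> 'x \<Rightarrow> 'x \<Rightarrow> 'u \<Rightarrow> ('x \<Rightarrow> real) \<Rightarrow> real" where
  "trans_prob f Pw t y x u z = (\<Sum>w\<in>UNIV. (if f t x u w z = y then 1 else 0) * pmf (Pw t) w)"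

definition hat_f ::
  "(nat \<Rightarrow> 'x::finite \<Rightarrow> 'u \<Rightarrow> 'w::finite \<Rightarrow> ('x \<Rightarrow> real) \<Rightarrow> 'x) \<Rightarrow> (nat \<Rightarrow> 'w pmf)
    \<Rightarrow> nat \<Rightarrow> ('x \<Rightarrow> real) \<Rightarrow> ('x \<Rightarrow> 'u) \<Rightarrow> 'x \<Rightarrow> real" where
  "hat_f f Pw t z \<gamma> y = (\<Sum>x\<in>UNIV. z x * trans_prob f Pw t y x (\<gamma> x) z)"

definition bar_f ::
  "(nat \<Rightarrow> 'x::finite \<Rightarrow> 'u \<Rightarrow> 'w::finite \<Rightarrow> ('x \<Rightarrow> real) \<Rightarrow> 'x) \<Rightarrow> nat
    \<Rightarrow> nat \<Rightarrow> ('x \<Rightarrow> real) \<Rightarrow> ('x \<Rightarrow> 'u) \<Rightarrow> 'w list \<Rightarrow> 'x \<Rightarrow> real" where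
  "bar_f f n t m \<gamma> ws y =
     (\<Sum>x\<in>UNIV. \<Sum>w\<in>UNIV. (if f t x (\<gamma> x) w m = y then 1 else 0) * m x *
        ((1 / real n) * (\<Sum>i<n. if ws ! i = w then 1 else 0)))"

definition sup_norm :: "('x::finite \<Rightarrow> real) \<Rightarrow> real" where
  "sup_norm v = Max (range (\<lambda>x. \<bar>v x\<bar>))"

definition emp_dists :: "nat \<Rightarrow> ('x::finite \<Rightarrow> real) set" where
  "emp_dists n = {m. (\<forall>x. m x \<ge> 0) \<and> (\<Sum>x\<in>UNIV. m x) = 1 \<and>
                     (\<forall>x. \<exists>k::nat. k \<le> n \<and> m x = real k / real n)}"

end

theory Submission
  imports Defs
begin

lemma finite_rep: "finite (set_pmf (replicate_pmf n (p::'w::finite pmf)))"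
proof -
  have "set_pmf (replicate_pmf n p) \<subseteq> {xs. set xs \<subseteq> UNIV \<and> length xs = n}"
    by (auto simp: set_replicate_pmf)
  moreover have "finite {xs. set xs \<subseteq> (UNIV::'w set) \<and> length xs = n}"
    by (rule finite_lists_length_eq) simp
  ultimately show ?thesis by (rule finite_subset)
qed

lemma exp_sum: "measure_pmf.expectation (p::'w::finite pmf) h = (\<Sum>a\<in>UNIV. pmf p a * h a)"
  by (subst integral_measure_pmf_real[of UNIV]) (auto simp: mult.commute)

lemma exp_rep_Suc:
  fixes p :: "'w::finite pmf" and h :: "'w list \<Rightarrow> real"
  shows "measure_pmf.expectation (replicate_pmf (Suc n) p) h =
     (\<Sum>a\<in>UNIV. pmf p a * measure_pmf.expectation (replicate_pmf n p) (\<lambda>xs. h (a#xs)))"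
proof -
  have "replicate_pmf (Suc n) p = p \<bind> (\<lambda>x. map_pmf (\<lambda>xs. x#xs) (replicate_pmf n p))"
    by (simp add: map_pmf_def)
  also have "measure_pmf.expectation \<dots> h = (\<Sum>a\<in>UNIV. pmf p a *\<^sub>R measure_pmf.expectation (map_pmf (\<lambda>xs. a#xs) (replicate_pmf n p)) h)"
    by (rule pmf_expectation_bind) (auto simp: finite_rep)
  finally show ?thesis by simp
qed

lemma var_lemma:
  fixes p :: "'w::finite pmf" and g :: "'w \<Rightarrow> real"
  assumes g0: "measure_pmf.expectation p g = 0"
  shows "measure_pmf.expectation (replicate_pmf n p) (\<lambda>xs. sum_list (map g xs)) = 0 \<and>
         measure_pmf.expectation (replicate_pmf n p) (\<lambda>xs. (sum_list (map g xs))^2) =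
           n * measure_pmf.expectation p (\<lambda>x. (g x)^2)"
proof (induction n)
  case 0
  then show ?case by simp
next
  case (Suc n)
  let ?E = "measure_pmf.expectation (replicate_pmf n p)"
  have int: "integrable (measure_pmf (replicate_pmf n p)) h" for h :: "'w list \<Rightarrow> real"
    by (rule integrable_measure_pmf_finite) (rule finite_rep)
  have g0': "(\<Sum>a\<in>UNIV. pmf p a * g a) = 0" using g0 by (simp add: exp_sum)
  have A: "measure_pmf.expectation (replicate_pmf (Suc n) p) (\<lambda>xs. sum_list (map g xs)) = 0"
  proof -
    have "?E (\<lambda>xs. g a + sum_list (map g xs)) = g a" for a
      using Suc.IH int by (subst Bochner_Integration.integral_add) auto
    then show ?thesis unfolding exp_rep_Suc by (simp add: g0')
  qed
  have "?E (\<lambda>xs. (g a + sum_list (map g xs))^2) = (g a)^2 + ?E (\<lambda>xs. (sum_list (map g xs))^2)" for a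
  proof -
    have "?E (\<lambda>xs. (g a + sum_list (map g xs))^2) = ?E (\<lambda>xs. (g a)^2 + (2 * g a * sum_list (map g xs) + (sum_list (map g xs))^2))"
      by (simp add: power2_eq_square algebra_simps)
    also have "\<dots> = (g a)^2 + (2 * g a * ?E (\<lambda>xs. sum_list (map g xs)) + ?E (\<lambda>xs. (sum_list (map g xs))^2))"
      using int by (simp add: Bochner_Integration.integral_add)
    finally show ?thesis using Suc.IH by simp
  qed
  then have B: "measure_pmf.expectation (replicate_pmf (Suc n) p) (\<lambda>xs. (sum_list (map g xs))^2) =
     (\<Sum>a\<in>UNIV. pmf p a * (g a)^2) + (\<Sum>a\<in>UNIV. pmf p a) * ?E (\<lambda>xs. (sum_list (map g xs))^2)"
    unfolding exp_rep_Suc by (simp add: algebra_simps sum.distrib sum_distrib_right)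
  have "(\<Sum>a\<in>UNIV. pmf p a) = 1"
    using sum_pmf_eq_1[of UNIV p] by simp
  with B Suc.IH A show ?case by (simp add: exp_sum[of p "\<lambda>x. (g x)^2"] algebra_simps)
qed


lemma abs_bound:
  fixes x :: real assumes "n > 0"
  shows "\<bar>x\<bar> \<le> 1 / sqrt n + sqrt n * x^2"
proof (cases "\<bar>x\<bar> \<le> 1 / sqrt n")
  case True
  have "sqrt n * x^2 \<ge> 0" using assms by (intro mult_nonneg_nonneg) auto
  then show ?thesis using True by linarith
next
  case False
  then have "\<bar>x\<bar> * sqrt n > 1" using assms by (simp add: field_simps)
  then have 1: "\<bar>x\<bar> * (\<bar>x\<bar> * sqrt n) \<ge> \<bar>x\<bar>"
    by (metis abs_ge_zero less_le_not_le mult.right_neutral mult_left_mono)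
  have 2: "\<bar>x\<bar> * (\<bar>x\<bar> * sqrt n) = sqrt n * x^2"
  proof -
    have a: "\<bar>x\<bar> * \<bar>x\<bar> = x^2" by (simp add: power2_eq_square)
    have "\<bar>x\<bar> * (\<bar>x\<bar> * sqrt n) = (\<bar>x\<bar> * \<bar>x\<bar>) * sqrt n" by (rule mult.assoc[symmetric])
    also have "\<dots> = x^2 * sqrt n" by (simp only: a)
    also have "\<dots> = sqrt n * x^2" by (rule mult.commute)
    finally show ?thesis .
  qed
  have 3: "1 / sqrt n \<ge> 0" using assms by simp
  show ?thesis using 1 2 3 by linarith
qed

lemma per_w:
  fixes p :: "'w::finite pmf"
  assumes n: "n \<ge> 1"
  shows "measure_pmf.expectation (replicate_pmf n p)
     (\<lambda>ws. \<bar>(1 / real n) * (\<Sum>i<n. if ws ! i = w then 1 else 0) - pmf p w\<bar>) \<le> 2 / sqrt n"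
proof -
  define g where "g x = (if x = w then 1 else 0) - pmf p w" for x
  define S where "S ws = sum_list (map g ws)" for ws
  have sp: "(\<Sum>a\<in>UNIV. pmf p a) = 1"
    using sum_pmf_eq_1[of UNIV p] by simp
  have g0: "measure_pmf.expectation p g = 0"
  proof -
    have a: "(\<Sum>a\<in>UNIV. pmf p a * (if a = w then 1 else 0)) = pmf p w"
      by (simp add: if_distrib cong: if_cong)
    have b: "(\<Sum>a\<in>UNIV. pmf p a * pmf p w) = pmf p w"
      by (simp add: sum_distrib_right[symmetric] sp)
    show ?thesis unfolding exp_sum g_def by (simp add: right_diff_distrib sum_subtractf a b)
  qed
  have g2: "measure_pmf.expectation p (\<lambda>x. (g x)^2) \<le> 1"
  proof -
    have "(\<Sum>a\<in>UNIV. pmf p a * (g a)^2) \<le> (\<Sum>a\<in>UNIV. pmf p a)"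
    proof (rule sum_mono)
      fix a
      have "\<bar>g a\<bar> \<le> 1" unfolding g_def using pmf_le_1[of p w] pmf_nonneg[of p w]
        by auto
      then have "(g a)^2 \<le> 1" by (simp add: abs_square_le_1)
      then show "pmf p a * (g a)^2 \<le> pmf p a"
        using pmf_nonneg[of p a] by (simp add: mult_left_le)
    qed
    then show ?thesis by (simp add: exp_sum sp)
  qed
  have ES: "measure_pmf.expectation (replicate_pmf n p) (\<lambda>ws. (S ws)^2) \<le> n"
    using var_lemma[OF g0, of n] g2 unfolding S_def
    by (simp add: mult_left_le)
  have npos: "real n > 0" using n by simp
  have int: "integrable (measure_pmf (replicate_pmf n p)) h" for h :: "'w list \<Rightarrow> real"
    by (rule integrable_measure_pmf_finite) (rule finite_rep)
  have pt: "\<bar>(1 / real n) * (\<Sum>i<n. if ws ! i = w then 1 else 0) - pmf p w\<bar>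
      \<le> 1 / sqrt n + sqrt n / (real n)^2 * (S ws)^2" if "ws \<in> set_pmf (replicate_pmf n p)" for ws
  proof -
    have len: "length ws = n" using that by (simp add: set_replicate_pmf)
    have "S ws = (\<Sum>i<n. g (ws ! i))"
      unfolding S_def using len by (simp add: sum_list_sum_nth atLeast0LessThan)
    also have "\<dots> = (\<Sum>i<n. if ws ! i = w then 1 else 0) - n * pmf p w"
      unfolding g_def by (simp add: sum_subtractf)
    finally have "(1 / real n) * (\<Sum>i<n. if ws ! i = w then 1 else 0) - pmf p w = S ws / n"
      using npos by (simp add: field_simps)
    moreover have "sqrt n * (S ws / n)^2 = sqrt n / (real n)^2 * (S ws)^2"
      by (simp add: power_divide)
    ultimately show ?thesis using abs_bound[OF npos, of "S ws / n"] by simp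
  qed
  have "measure_pmf.expectation (replicate_pmf n p)
     (\<lambda>ws. \<bar>(1 / real n) * (\<Sum>i<n. if ws ! i = w then 1 else 0) - pmf p w\<bar>)
     \<le> measure_pmf.expectation (replicate_pmf n p) (\<lambda>ws. 1 / sqrt n + sqrt n / (real n)^2 * (S ws)^2)"
    by (rule integral_mono_AE[OF int int]) (rule AE_pmfI, rule pt)
  also have "\<dots> = 1 / sqrt n + sqrt n / (real n)^2 * measure_pmf.expectation (replicate_pmf n p) (\<lambda>ws. (S ws)^2)"
    using int by (simp add: Bochner_Integration.integral_add)
  also have "\<dots> \<le> 1 / sqrt n + sqrt n / (real n)^2 * n"
    using ES npos by (intro add_left_mono mult_left_mono) auto
  also have "\<dots> = 2 / sqrt n"
  proof -
    have "sqrt n / (real n)^2 * n = sqrt n / n" by (simp add: power2_eq_square)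
    also have "\<dots> = 1 / sqrt n"
    proof -
      have "sqrt (real n) > 0" "sqrt (real n) * sqrt (real n) = real n" using npos by simp_all
      then show ?thesis by (simp add: field_simps)
    qed
    finally show ?thesis by simp
  qed
  finally show ?thesis .
qed


lemma pointwise:
  fixes f :: "nat \<Rightarrow> 'x::finite \<Rightarrow> 'u::finite \<Rightarrow> 'w::finite \<Rightarrow> ('x \<Rightarrow> real) \<Rightarrow> 'x"
  assumes m0: "\<forall>x. m x \<ge> 0" and m1: "(\<Sum>x\<in>UNIV. m x) = 1"
  shows "sup_norm (\<lambda>y. bar_f f n t m \<gamma> ws y - hat_f f Pw t m \<gamma> y)
     \<le> (\<Sum>w\<in>UNIV. \<bar>(1 / real n) * (\<Sum>i<n. if ws ! i = w then 1 else 0) - pmf (Pw t) w\<bar>)"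
proof -
  define e where "e w = (1 / real n) * (\<Sum>i<n. if ws ! i = w then 1 else 0) - pmf (Pw t) w" for w
  define c where "c x w y = (if f t x (\<gamma> x) w m = y then 1 else (0::real))" for x w y
  have diff: "bar_f f n t m \<gamma> ws y - hat_f f Pw t m \<gamma> y = (\<Sum>x\<in>UNIV. \<Sum>w\<in>UNIV. c x w y * m x * e w)" for y
    unfolding bar_f_def hat_f_def trans_prob_def e_def c_def
    by (simp add: sum_subtractf[symmetric] sum_distrib_left right_diff_distrib mult_ac)
  have bd: "\<bar>bar_f f n t m \<gamma> ws y - hat_f f Pw t m \<gamma> y\<bar> \<le> (\<Sum>w\<in>UNIV. \<bar>e w\<bar>)" for y
  proof -
    have "\<bar>\<Sum>x\<in>UNIV. \<Sum>w\<in>UNIV. c x w y * m x * e w\<bar> \<le> (\<Sum>x\<in>UNIV. \<Sum>w\<in>UNIV. \<bar>c x w y * m x * e w\<bar>)"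
      by (rule order_trans[OF sum_abs]) (intro sum_mono sum_abs)
    also have "\<dots> \<le> (\<Sum>x\<in>UNIV. \<Sum>w\<in>UNIV. m x * \<bar>e w\<bar>)"
    proof (intro sum_mono)
      fix x w
      show "\<bar>c x w y * m x * e w\<bar> \<le> m x * \<bar>e w\<bar>"
        using m0 by (auto simp: c_def abs_mult)
    qed
    also have "\<dots> = (\<Sum>x\<in>UNIV. m x) * (\<Sum>w\<in>UNIV. \<bar>e w\<bar>)"
      by (simp add: sum_product)
    finally show ?thesis using diff m1 by simp
  qed
  show ?thesis unfolding sup_norm_def e_def[symmetric]
    using bd by (subst Max_le_iff) auto
qed

theorem lemma4:
  fixes T :: nat
    and f :: "nat \<Rightarrow> 'x::finite \<Rightarrow> 'u::finite \<Rightarrow> 'w::finite \<Rightarrow> ('x \<Rightarrow> real) \<Rightarrow> 'x"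
    and Pw :: "nat \<Rightarrow> 'w pmf"
  shows "\<exists>C. \<forall>n::nat. n \<ge> 1 \<longrightarrow>
           (\<forall>t\<in>{1..T}. \<forall>m\<in>emp_dists n. \<forall>\<gamma>::'x \<Rightarrow> 'u.
              measure_pmf.expectation (replicate_pmf n (Pw t))
                (\<lambda>ws. sup_norm (\<lambda>y. bar_f f n t m \<gamma> ws y - hat_f f Pw t m \<gamma> y))
              \<le> C / sqrt (real n))"
proof (intro exI[of _ "2 * real CARD('w)"] allI impI ballI)
  fix n t :: nat and m :: "'x \<Rightarrow> real" and \<gamma> :: "'x \<Rightarrow> 'u"
  assume n: "n \<ge> 1" and m: "m \<in> emp_dists n"
  have m0: "\<forall>x. m x \<ge> 0" and m1: "(\<Sum>x\<in>UNIV. m x) = 1" using m by (auto simp: emp_dists_def)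
  have int: "integrable (measure_pmf (replicate_pmf n (Pw t))) h" for h :: "'w list \<Rightarrow> real"
    by (rule integrable_measure_pmf_finite) (rule finite_rep)
  have "measure_pmf.expectation (replicate_pmf n (Pw t))
                (\<lambda>ws. sup_norm (\<lambda>y. bar_f f n t m \<gamma> ws y - hat_f f Pw t m \<gamma> y))
     \<le> measure_pmf.expectation (replicate_pmf n (Pw t))
       (\<lambda>ws. \<Sum>w\<in>UNIV. \<bar>(1 / real n) * (\<Sum>i<n. if ws ! i = w then 1 else 0) - pmf (Pw t) w\<bar>)"
    by (rule integral_mono[OF int int]) (rule pointwise[OF m0 m1])
  also have "\<dots> = (\<Sum>w\<in>UNIV. measure_pmf.expectation (replicate_pmf n (Pw t))
       (\<lambda>ws. \<bar>(1 / real n) * (\<Sum>i<n. if ws ! i = w then 1 else 0) - pmf (Pw t) w\<bar>))"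
    by (rule Bochner_Integration.integral_sum) (rule int)
  also have "\<dots> \<le> (\<Sum>w\<in>(UNIV::'w set). 2 / sqrt n)"
    by (rule sum_mono) (rule per_w[OF n])
  also have "\<dots> = 2 * real CARD('w) / sqrt n" by simp
  finally show "measure_pmf.expectation (replicate_pmf n (Pw t))
                (\<lambda>ws. sup_norm (\<lambda>y. bar_f f n t m \<gamma> ws y - hat_f f Pw t m \<gamma> y))
              \<le> 2 * real CARD('w) / sqrt (real n)" .
qed

end
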